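(* Let $(A,[\cdot,\cdot])$ and $(V,[\cdot,\cdot]_V)$ be Malcev algebras and $(V;[\cdot,\cdot]_V,\rho)$ an $A$-module Malcev algebra. Then $A\oplus V$ with the bracket $[x+a,y+b]_\rho=[x,y]+\rho(x)b-\rho(y)a+[a,b]_V$ ($x,y\in A$, $a,b\in V$) is a Malcev algebra.
   Context: Field of characteristic zero. A Malcev algebra is a vector space with an anti-symmetric bracket satisfying $J(x,y,[x,z])=[J(x,y,z),x]$, $J(x,y,z)=[[x,y],z]+[[z,x],y]+[[y,z],x]$. A representation of $(A,[\cdot,\cdot])$ on $V$ is a linear $\rho:A\to\mathrm{End}(V)$ with $\rho([[x,y],z])=\rho(x)\rho(y)\rho(z)-\rho(z)\rho(x)\rho(y)+\rho(y)\rho([z,x])-\rho([y,z])\rho(x)$. An $A$-module Malcev algebra $(V;[\cdot,\cdot]_V,\rho)$ consists of a Malcev algebra $(V,[\cdot,\cdot]_V)$ and a representation $\rho$ of $A$ on $V$ such that for all $x,y\in A$, $a,b,c\in V$: $\rho([x,y])[a,b]_V=\rho(x)[\rho(y)a,b]_V-[\rho(y)\rho(x)a,b]_V-[\rho(x)\rho(y)b,a]_V+\rho(y)[\rho(x)b,a]_V$; $[\rho(x)a,\rho(y)b]_V=[\rho([x,y])a,b]_V-\rho(x)[\rho(y)a,b]_V+\rho(y)\rho(x)[a,b]_V+[\rho(y)\rho(x)b,a]_V$; $[\rho(x)a,[b,c]_V]_V=[[\rho(x)b,a]_V,c]_V-\rho(x)[[b,a]_V,c]_V-[\rho(x)[a,c]_V,b]_V-[[\rho(x)c,b]_V,a]_V$.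 *)

theory Defs
  imports "HOL.Vector_Spaces" "HOL-Library.Product_Plus"
begin

definition bilinear_map ::
  "('k::field \<Rightarrow> 'a::ab_group_add \<Rightarrow> 'a) \<Rightarrow> ('k \<Rightarrow> 'b::ab_group_add \<Rightarrow> 'b) \<Rightarrow> ('k \<Rightarrow> 'c::ab_group_add \<Rightarrow> 'c)
    \<Rightarrow> ('a \<Rightarrow> 'b \<Rightarrow> 'c) \<Rightarrow> bool" where
  "bilinear_map s1 s2 s3 f \<longleftrightarrow>
     (\<forall>x. Vector_Spaces.linear s2 s3 (f x)) \<and> (\<forall>y. Vector_Spaces.linear s1 s3 (\<lambda>x. f x y))"

definition jacobiator :: "('a \<Rightarrow> 'a \<Rightarrow> 'a::ab_group_add) \<Rightarrow> 'a \<Rightarrow> 'a \<Rightarrow> 'a \<Rightarrow> 'a" where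
  "jacobiator br x y z = br (br x y) z + br (br z x) y + br (br y z) x"

definition malcev_algebra :: "('k::field_char_0 \<Rightarrow> 'a::ab_group_add \<Rightarrow> 'a) \<Rightarrow> ('a \<Rightarrow> 'a \<Rightarrow> 'a) \<Rightarrow> bool" where
  "malcev_algebra sc br \<longleftrightarrow>
     vector_space sc \<and> bilinear_map sc sc sc br \<and>
     (\<forall>x y. br x y = - br y x) \<and>
     (\<forall>x y z. jacobiator br x y (br x z) = br (jacobiator br x y z) x)"

definition malcev_rep ::
  "('k::field_char_0 \<Rightarrow> 'a::ab_group_add \<Rightarrow> 'a) \<Rightarrow> ('a \<Rightarrow> 'a \<Rightarrow> 'a)
    \<Rightarrow> ('k \<Rightarrow> 'v::ab_group_add \<Rightarrow> 'v) \<Rightarrow> ('a \<Rightarrow> 'v \<Rightarrow> 'v) \<Rightarrow> bool" where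
  "malcev_rep sA brA sV rho \<longleftrightarrow>
     vector_space sV \<and>
     bilinear_map sA sV sV rho \<and>
     (\<forall>x y z v. rho (brA (brA x y) z) v =
        rho x (rho y (rho z v)) - rho z (rho x (rho y v))
        + rho y (rho (brA z x) v) - rho (brA y z) (rho x v))"

definition module_malcev_algebra ::
  "('k::field_char_0 \<Rightarrow> 'a::ab_group_add \<Rightarrow> 'a) \<Rightarrow> ('a \<Rightarrow> 'a \<Rightarrow> 'a)
    \<Rightarrow> ('k \<Rightarrow> 'v::ab_group_add \<Rightarrow> 'v) \<Rightarrow> ('v \<Rightarrow> 'v \<Rightarrow> 'v) \<Rightarrow> ('a \<Rightarrow> 'v \<Rightarrow> 'v) \<Rightarrow> bool" where
  "module_malcev_algebra sA brA sV brV rho \<longleftrightarrow>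
     malcev_algebra sV brV \<and> malcev_rep sA brA sV rho \<and>
     (\<forall>x y a b.
        rho (brA x y) (brV a b) =
          rho x (brV (rho y a) b) - brV (rho y (rho x a)) b
          - brV (rho x (rho y b)) a + rho y (brV (rho x b) a)) \<and>
     (\<forall>x y a b.
        brV (rho x a) (rho y b) =
          brV (rho (brA x y) a) b - rho x (brV (rho y a) b)
          + rho y (rho x (brV a b)) + brV (rho y (rho x b)) a) \<and>
     (\<forall>x a b c.
        brV (rho x a) (brV b c) =
          brV (brV (rho x b) a) c - rho x (brV (brV b a) c)
          - brV (rho x (brV a c)) b - brV (brV (rho x c) b) a)"

definition sum_scale :: "('k \<Rightarrow> 'a \<Rightarrow> 'a) \<Rightarrow> ('k \<Rightarrow> 'v \<Rightarrow> 'v) \<Rightarrow> 'k \<Rightarrow> 'a \<times> 'v \<Rightarrow> 'a \<times> 'v" where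
  "sum_scale sA sV c p = (sA c (fst p), sV c (snd p))"

definition semidirect_bracket ::
  "('a \<Rightarrow> 'a \<Rightarrow> 'a) \<Rightarrow> ('v::ab_group_add \<Rightarrow> 'v \<Rightarrow> 'v) \<Rightarrow> ('a \<Rightarrow> 'v \<Rightarrow> 'v)
    \<Rightarrow> 'a \<times> 'v \<Rightarrow> 'a \<times> 'v \<Rightarrow> 'a \<times> 'v" where
  "semidirect_bracket brA brV rho p q =
     (brA (fst p) (fst q), rho (fst p) (snd q) - rho (fst q) (snd p) + brV (snd p) (snd q))"

end

theory Submission
  imports Defs
begin

lemma key_snd:
  fixes brA :: "'a::ab_group_add \<Rightarrow> 'a \<Rightarrow> 'a" and brV :: "'v::ab_group_add \<Rightarrow> 'v \<Rightarrow> 'v"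
    and rho :: "'a \<Rightarrow> 'v \<Rightarrow> 'v"
  assumes aA1: "\<And>u v w. brA (u + v) w = brA u w + brA v w"
    and aA2: "\<And>u v w. brA w (u + v) = brA w u + brA w v"
    and nA1: "\<And>u w. brA (- u) w = - brA u w"
    and nA2: "\<And>u w. brA w (- u) = - brA w u"
    and aV1: "\<And>u v w. brV (u + v) w = brV u w + brV v w"
    and aV2: "\<And>u v w. brV w (u + v) = brV w u + brV w v"
    and nV1: "\<And>u w. brV (- u) w = - brV u w"
    and nV2: "\<And>u w. brV w (- u) = - brV w u"
    and aR1: "\<And>u v w. rho (u + v) w = rho u w + rho v w"
    and aR2: "\<And>u v w. rho w (u + v) = rho w u + rho w v"
    and nR1: "\<And>u w. rho (- u) w = - rho u w"
    and nR2: "\<And>u w. rho w (- u) = - rho w u"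
    and z1: "\<And>w. brA 0 w = 0" and z2: "\<And>w. brA w 0 = 0"
    and z3: "\<And>w. brV 0 w = 0" and z4: "\<And>w. brV w 0 = 0"
    and z5: "\<And>w. rho 0 w = 0" and z6: "\<And>w. rho w 0 = 0"
    and antiA: "\<And>u v. brA u v = - brA v u"
    and antiV: "\<And>u v. brV u v = - brV v u"
    and zA: "\<And>u. brA u u = 0"
    and zV: "\<And>u. brV u u = 0"
    and R: "\<And>x y z v. rho (brA (brA x y) z) v =
        rho x (rho y (rho z v)) - rho z (rho x (rho y v))
        + rho y (rho (brA z x) v) - rho (brA y z) (rho x v)"
    and C1: "\<And>x y a b. rho (brA x y) (brV a b) =
          rho x (brV (rho y a) b) - brV (rho y (rho x a)) b
          - brV (rho x (rho y b)) a + rho y (brV (rho x b) a)"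
    and C2: "\<And>x y a b. brV (rho x a) (rho y b) =
          brV (rho (brA x y) a) b - rho x (brV (rho y a) b)
          + rho y (rho x (brV a b)) + brV (rho y (rho x b)) a"
    and C3: "\<And>x a b c. brV (rho x a) (brV b c) =
          brV (brV (rho x b) a) c - rho x (brV (brV b a) c)
          - brV (rho x (brV a c)) b - brV (brV (rho x c) b) a"
    and MV: "\<And>a b c. jacobiator brV a b (brV a c) = brV (jacobiator brV a b c) a"
  shows "snd (jacobiator (semidirect_bracket brA brV rho) (x,a) (y,b) (semidirect_bracket brA brV rho (x,a) (z,c)))
       - snd (semidirect_bracket brA brV rho (jacobiator (semidirect_bracket brA brV rho) (x,a) (y,b) (z,c)) (x,a)) = 0"
proof -
  have fl0: "brA y x = - brA x y" by (rule antiA)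
  have fl1: "brA z x = - brA x z" by (rule antiA)
  have fl2: "brA z y = - brA y z" by (rule antiA)
  have fl3: "brA (brA x y) z = - brA z (brA x y)" by (rule antiA)
  have fl4: "brA (brA x z) x = - brA x (brA x z)" by (rule antiA)
  have fl5: "brA (brA x z) y = - brA y (brA x z)" by (rule antiA)
  have fl6: "brA (brA x (brA x z)) y = - brA y (brA x (brA x z))" by (rule antiA)
  have fl7: "brA (brA x (brA y z)) x = - brA x (brA x (brA y z))" by (rule antiA)
  have fl8: "brA (brA y z) x = - brA x (brA y z)" by (rule antiA)
  have fl9: "brA (brA y (brA x z)) x = - brA x (brA y (brA x z))" by (rule antiA)
  have fl10: "brA (brA z (brA x y)) x = - brA x (brA z (brA x y))" by (rule antiA)
  have fl11: "brV b a = - brV a b" by (rule antiV)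
  have fl12: "brV c a = - brV a c" by (rule antiV)
  have fl13: "brV c b = - brV b c" by (rule antiV)
  have fl14: "brV (rho x a) b = - brV b (rho x a)" by (rule antiV)
  have fl15: "brV (rho x a) c = - brV c (rho x a)" by (rule antiV)
  have fl16: "brV (rho x b) a = - brV a (rho x b)" by (rule antiV)
  have fl17: "brV (rho x b) c = - brV c (rho x b)" by (rule antiV)
  have fl18: "brV (rho x c) a = - brV a (rho x c)" by (rule antiV)
  have fl19: "brV (rho x c) b = - brV b (rho x c)" by (rule antiV)
  have fl20: "brV (rho x (rho x c)) b = - brV b (rho x (rho x c))" by (rule antiV)
  have fl21: "brV (rho x (rho y c)) a = - brV a (rho x (rho y c))" by (rule antiV)
  have fl22: "brV (rho x (rho z a)) b = - brV b (rho x (rho z a))" by (rule antiV)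
  have fl23: "brV (rho x (rho z b)) a = - brV a (rho x (rho z b))" by (rule antiV)
  have fl24: "brV (rho x (brV a b)) c = - brV c (rho x (brV a b))" by (rule antiV)
  have fl25: "brV (rho x (brV a c)) b = - brV b (rho x (brV a c))" by (rule antiV)
  have fl26: "brV (rho x (brV b c)) a = - brV a (rho x (brV b c))" by (rule antiV)
  have fl27: "brV (rho y a) c = - brV c (rho y a)" by (rule antiV)
  have fl28: "brV (rho y a) (rho x c) = - brV (rho x c) (rho y a)" by (rule antiV)
  have fl29: "brV (rho y c) a = - brV a (rho y c)" by (rule antiV)
  have fl30: "brV (rho y (rho x a)) c = - brV c (rho y (rho x a))" by (rule antiV)
  have fl31: "brV (rho y (rho x c)) a = - brV a (rho y (rho x c))" by (rule antiV)
  have fl32: "brV (rho y (rho z a)) a = - brV a (rho y (rho z a))" by (rule antiV)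
  have fl33: "brV (rho y (brV a c)) a = - brV a (rho y (brV a c))" by (rule antiV)
  have fl34: "brV (rho z a) a = - brV a (rho z a)" by (rule antiV)
  have fl35: "brV (rho z a) b = - brV b (rho z a)" by (rule antiV)
  have fl36: "brV (rho z a) (rho x b) = - brV (rho x b) (rho z a)" by (rule antiV)
  have fl37: "brV (rho z b) a = - brV a (rho z b)" by (rule antiV)
  have fl38: "brV (rho z (rho x b)) a = - brV a (rho z (rho x b))" by (rule antiV)
  have fl39: "brV (rho z (rho y a)) a = - brV a (rho z (rho y a))" by (rule antiV)
  have fl40: "brV (rho z (brV a b)) a = - brV a (rho z (brV a b))" by (rule antiV)
  have fl41: "brV (rho (brA x y) c) a = - brV a (rho (brA x y) c)" by (rule antiV)
  have fl42: "brV (rho (brA x z) a) b = - brV b (rho (brA x z) a)" by (rule antiV)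
  have fl43: "brV (rho (brA x z) b) a = - brV a (rho (brA x z) b)" by (rule antiV)
  have fl44: "brV (rho (brA y z) a) a = - brV a (rho (brA y z) a)" by (rule antiV)
  have fl45: "brV (brV a b) c = - brV c (brV a b)" by (rule antiV)
  have fl46: "brV (brV a b) (rho x c) = - brV (rho x c) (brV a b)" by (rule antiV)
  have fl47: "brV (brV a b) (rho z a) = - brV (rho z a) (brV a b)" by (rule antiV)
  have fl48: "brV (brV a c) a = - brV a (brV a c)" by (rule antiV)
  have fl49: "brV (brV a c) b = - brV b (brV a c)" by (rule antiV)
  have fl50: "brV (brV a (rho x b)) c = - brV c (brV a (rho x b))" by (rule antiV)
  have fl51: "brV (brV a (rho x c)) b = - brV b (brV a (rho x c))" by (rule antiV)
  have fl52: "brV (brV a (rho y c)) a = - brV a (brV a (rho y c))" by (rule antiV)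
  have fl53: "brV (brV a (rho z a)) b = - brV b (brV a (rho z a))" by (rule antiV)
  have fl54: "brV (brV a (rho z b)) a = - brV a (brV a (rho z b))" by (rule antiV)
  have fl55: "brV (brV a (brV a c)) b = - brV b (brV a (brV a c))" by (rule antiV)
  have fl56: "brV (brV a (brV b c)) a = - brV a (brV a (brV b c))" by (rule antiV)
  have fl57: "brV (brV b c) a = - brV a (brV b c)" by (rule antiV)
  have fl58: "brV (brV b (rho x c)) a = - brV a (brV b (rho x c))" by (rule antiV)
  have fl59: "brV (brV b (rho z a)) a = - brV a (brV b (rho z a))" by (rule antiV)
  have fl60: "brV (brV b (brV a c)) a = - brV a (brV b (brV a c))" by (rule antiV)
  have fl61: "brV (brV c (rho x a)) b = - brV b (brV c (rho x a))" by (rule antiV)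
  have fl62: "brV (brV c (rho x b)) a = - brV a (brV c (rho x b))" by (rule antiV)
  have fl63: "brV (brV c (rho y a)) a = - brV a (brV c (rho y a))" by (rule antiV)
  have fl64: "brV (brV c (brV a b)) a = - brV a (brV c (brV a b))" by (rule antiV)
  have fl65: "brA x x = 0" by (rule zA)
  have fl66: "brV a a = 0" by (rule zV)
  have h0: "(rho (brA (brA z x) y) a) - (rho z (rho x (rho y a)) - rho y (rho z (rho x a)) + rho x (rho (brA y z) a) - rho (brA x y) (rho z a)) = 0" using R[where x=z and y=x and z=y and v=a] by simp
  have h1: "(rho (brA (brA y z) x) a) - (rho y (rho z (rho x a)) - rho x (rho y (rho z a)) + rho z (rho (brA x y) a) - rho (brA z x) (rho y a)) = 0" using R[where x=y and y=z and z=x and v=a] by simp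
  have h2: "(rho (brA (brA x y) z) a) - (rho x (rho y (rho z a)) - rho z (rho x (rho y a)) + rho y (rho (brA z x) a) - rho (brA y z) (rho x a)) = 0" using R[where x=x and y=y and z=z and v=a] by simp
  have h3: "(rho (brA x y) (brV a c)) - (rho x (brV (rho y a) c) - brV (rho y (rho x a)) c - brV (rho x (rho y c)) a + rho y (brV (rho x c) a)) = 0" using C1[where x=x and y=y and a=a and b=c] by simp
  have h4: "(brV (rho x c) (rho y a)) - (brV (rho (brA x y) c) a - rho x (brV (rho y c) a) + rho y (rho x (brV c a)) + brV (rho y (rho x a)) c) = 0" using C2[where x=x and y=y and a=c and b=a] by simp
  have h5: "(brV (rho y a) (brV c a)) - (brV (brV (rho y c) a) a - rho y (brV (brV c a) a) - brV (rho y (brV a a)) c - brV (brV (rho y a) c) a) = 0" using C3[where x=y and a=a and b=c and c=a] by simp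
  have h6: "(rho (brA (brA x z) x) b) - (rho x (rho z (rho x b)) - rho x (rho x (rho z b)) + rho z (rho (brA x x) b) - rho (brA z x) (rho x b)) = 0" using R[where x=x and y=z and z=x and v=b] by simp
  have h7: "(rho (brA (brA x z) y) a) - (rho x (rho z (rho y a)) - rho y (rho x (rho z a)) + rho z (rho (brA y x) a) - rho (brA z y) (rho x a)) = 0" using R[where x=x and y=z and z=y and v=a] by simp
  have h8: "(brV (rho z a) (rho x b)) - (brV (rho (brA z x) a) b - rho z (brV (rho x a) b) + rho x (rho z (brV a b)) + brV (rho x (rho z b)) a) = 0" using C2[where x=z and y=x and a=a and b=b] by simp
  have h9: "(rho (brA (brA x x) y) c) - (rho x (rho x (rho y c)) - rho y (rho x (rho x c)) + rho x (rho (brA y x) c) - rho (brA x y) (rho x c)) = 0" using R[where x=x and y=x and z=y and v=c] by simp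
  have h10: "(brV (rho x b) (rho x c)) - (brV (rho (brA x x) b) c - rho x (brV (rho x b) c) + rho x (rho x (brV b c)) + brV (rho x (rho x c)) b) = 0" using C2[where x=x and y=x and a=b and b=c] by simp
  have h11: "(rho (brA x z) (brV b a)) - (rho x (brV (rho z b) a) - brV (rho z (rho x b)) a - brV (rho x (rho z a)) b + rho z (brV (rho x a) b)) = 0" using C1[where x=x and y=z and a=b and b=a] by simp
  have h12: "(brV (rho x b) (brV c a)) - (brV (brV (rho x c) b) a - rho x (brV (brV c b) a) - brV (rho x (brV b a)) c - brV (brV (rho x a) c) b) = 0" using C3[where x=x and a=b and b=c and c=a] by simp
  have h13: "(brV (rho z a) (brV a b)) - (brV (brV (rho z a) a) b - rho z (brV (brV a a) b) - brV (rho z (brV a b)) a - brV (brV (rho z b) a) a) = 0" using C3[where x=z and a=a and b=a and c=b] by simp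
  have h14: "(jacobiator brV a b (brV a c)) - (brV (jacobiator brV a b c) a) = 0" using MV[where a=a and b=b and c=c] by simp
  have h15: "(brV (rho y a) (rho z a)) - (brV (rho (brA y z) a) a - rho y (brV (rho z a) a) + rho z (rho y (brV a a)) + brV (rho z (rho y a)) a) = 0" using C2[where x=y and y=z and a=a and b=a] by simp
  have h16: "(brV (rho x c) (brV a b)) - (brV (brV (rho x a) c) b - rho x (brV (brV a c) b) - brV (rho x (brV c b)) a - brV (brV (rho x b) a) c) = 0" using C3[where x=x and a=c and b=a and c=b] by simp
  have h17: "(brV (rho x a) (brV c b)) - (brV (brV (rho x c) a) b - rho x (brV (brV c a) b) - brV (rho x (brV a b)) c - brV (brV (rho x b) c) a) = 0" using C3[where x=x and a=a and b=c and c=b] by simp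
  have h18: "(brV (rho x a) (brV b c)) - (brV (brV (rho x b) a) c - rho x (brV (brV b a) c) - brV (rho x (brV a c)) b - brV (brV (rho x c) b) a) = 0" using C3[where x=x and a=a and b=b and c=c] by simp
  have E: "snd (jacobiator (semidirect_bracket brA brV rho) (x,a) (y,b) (semidirect_bracket brA brV rho (x,a) (z,c)))
       - snd (semidirect_bracket brA brV rho (jacobiator (semidirect_bracket brA brV rho) (x,a) (y,b) (z,c)) (x,a))
     = - ((rho (brA (brA z x) y) a) - (rho z (rho x (rho y a)) - rho y (rho z (rho x a)) + rho x (rho (brA y z) a) - rho (brA x y) (rho z a)))
  - ((rho (brA (brA y z) x) a) - (rho y (rho z (rho x a)) - rho x (rho y (rho z a)) + rho z (rho (brA x y) a) - rho (brA z x) (rho y a)))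
  - ((rho (brA (brA x y) z) a) - (rho x (rho y (rho z a)) - rho z (rho x (rho y a)) + rho y (rho (brA z x) a) - rho (brA y z) (rho x a)))
  + ((rho (brA x y) (brV a c)) - (rho x (brV (rho y a) c) - brV (rho y (rho x a)) c - brV (rho x (rho y c)) a + rho y (brV (rho x c) a)))
  + ((brV (rho x c) (rho y a)) - (brV (rho (brA x y) c) a - rho x (brV (rho y c) a) + rho y (rho x (brV c a)) + brV (rho y (rho x a)) c))
  + ((brV (rho y a) (brV c a)) - (brV (brV (rho y c) a) a - rho y (brV (brV c a) a) - brV (rho y (brV a a)) c - brV (brV (rho y a) c) a))
  + ((rho (brA (brA x z) x) b) - (rho x (rho z (rho x b)) - rho x (rho x (rho z b)) + rho z (rho (brA x x) b) - rho (brA z x) (rho x b)))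
  - ((rho (brA (brA x z) y) a) - (rho x (rho z (rho y a)) - rho y (rho x (rho z a)) + rho z (rho (brA y x) a) - rho (brA z y) (rho x a)))
  + ((brV (rho z a) (rho x b)) - (brV (rho (brA z x) a) b - rho z (brV (rho x a) b) + rho x (rho z (brV a b)) + brV (rho x (rho z b)) a))
  + ((rho (brA (brA x x) y) c) - (rho x (rho x (rho y c)) - rho y (rho x (rho x c)) + rho x (rho (brA y x) c) - rho (brA x y) (rho x c)))
  + ((brV (rho x b) (rho x c)) - (brV (rho (brA x x) b) c - rho x (brV (rho x b) c) + rho x (rho x (brV b c)) + brV (rho x (rho x c)) b))
  + ((rho (brA x z) (brV b a)) - (rho x (brV (rho z b) a) - brV (rho z (rho x b)) a - brV (rho x (rho z a)) b + rho z (brV (rho x a) b)))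
  - ((brV (rho x b) (brV c a)) - (brV (brV (rho x c) b) a - rho x (brV (brV c b) a) - brV (rho x (brV b a)) c - brV (brV (rho x a) c) b))
  + ((brV (rho z a) (brV a b)) - (brV (brV (rho z a) a) b - rho z (brV (brV a a) b) - brV (rho z (brV a b)) a - brV (brV (rho z b) a) a))
  + ((jacobiator brV a b (brV a c)) - (brV (jacobiator brV a b c) a))
  + ((brV (rho y a) (rho z a)) - (brV (rho (brA y z) a) a - rho y (brV (rho z a) a) + rho z (rho y (brV a a)) + brV (rho z (rho y a)) a))
  - ((brV (rho x c) (brV a b)) - (brV (brV (rho x a) c) b - rho x (brV (brV a c) b) - brV (rho x (brV c b)) a - brV (brV (rho x b) a) c))
  - ((brV (rho x a) (brV c b)) - (brV (brV (rho x c) a) b - rho x (brV (brV c a) b) - brV (rho x (brV a b)) c - brV (brV (rho x b) c) a))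
  - ((brV (rho x a) (brV b c)) - (brV (brV (rho x b) a) c - rho x (brV (brV b a) c) - brV (rho x (brV a c)) b - brV (brV (rho x c) b) a))"
    unfolding semidirect_bracket_def jacobiator_def
    apply (simp only: fst_conv snd_conv fst_add snd_add diff_conv_add_uminus aA1 aA2 nA1 nA2 aV1 aV2 nV1 nV2 aR1 aR2 nR1 nR2 fl0 fl1 fl2 fl3 fl4 fl5 fl6 fl7 fl8 fl9 fl10 fl11 fl12 fl13 fl14 fl15 fl16 fl17 fl18 fl19 fl20 fl21 fl22 fl23 fl24 fl25 fl26 fl27 fl28 fl29 fl30 fl31 fl32 fl33 fl34 fl35 fl36 fl37 fl38 fl39 fl40 fl41 fl42 fl43 fl44 fl45 fl46 fl47 fl48 fl49 fl50 fl51 fl52 fl53 fl54 fl55 fl56 fl57 fl58 fl59 fl60 fl61 fl62 fl63 fl64 fl65 fl66 minus_add_distrib minus_minus neg_0_equal_iff_equal add_0_right add_0_left z1 z2 z3 z4 z5 z6 neg_0_equal_iff_equal minus_zero)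
    apply (simp add: algebra_simps)
    done
  show ?thesis unfolding E h0 h1 h2 h3 h4 h5 h6 h7 h8 h9 h10 h11 h12 h13 h14 h15 h16 h17 h18 by simp
qed


lemma lin_facts:
  assumes "Vector_Spaces.linear s1 s2 f"
  shows "f (u + v) = f u + f v" "f (- u) = - f u" "f 0 = 0" "f (s1 c u) = s2 c (f u)"
proof -
  have mh: "module_hom s1 s2 f" using assms by (simp add: linear_iff_module_hom)
  show "f (u + v) = f u + f v" "f (- u) = - f u" "f 0 = 0" "f (s1 c u) = s2 c (f u)"
    using module_hom.neg[OF mh] module_hom.zero[OF mh] module_hom.add[OF mh] module_hom.scale[OF mh] by auto
qed

lemma vs_prod:
  assumes "vector_space sA" "vector_space sV"
  shows "vector_space (sum_scale sA sV)"
  using assms unfolding vector_space_def sum_scale_def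
  by (auto simp: prod_eq_iff)

lemma zero_self:
  fixes sV :: "'k::field_char_0 \<Rightarrow> 'v::ab_group_add \<Rightarrow> 'v" and w :: 'v
  assumes vs: "vector_space sV" and h: "w = - w"
  shows "w = 0"
proof -
  have m: "module sV" using vs by (simp add: module_iff_vector_space)
  have "w + w = 0" using h by (metis add.right_inverse)
  have "sV (1/2) (w+w) = sV (1/2) w + sV (1/2) w" by (rule module.scale_right_distrib[OF m])
  also have "\<dots> = sV (1/2 + 1/2) w" by (rule module.scale_left_distrib[OF m, symmetric])
  also have "\<dots> = w" using module.scale_one[OF m] by simp
  finally have "w = sV (1/2) (w+w)" by simp
  also have "\<dots> = 0" using \<open>w + w = 0\<close> module.scale_zero_right[OF m] by simp
  finally show ?thesis .
qed

theorem proposition4p2: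
  fixes sA :: "'k::field_char_0 \<Rightarrow> 'a::ab_group_add \<Rightarrow> 'a"
    and sV :: "'k \<Rightarrow> 'v::ab_group_add \<Rightarrow> 'v"
    and brA :: "'a \<Rightarrow> 'a \<Rightarrow> 'a" and brV :: "'v \<Rightarrow> 'v \<Rightarrow> 'v"
    and rho :: "'a \<Rightarrow> 'v \<Rightarrow> 'v"
  assumes "malcev_algebra sA brA"
    and "malcev_algebra sV brV"
    and "module_malcev_algebra sA brA sV brV rho"
  shows "malcev_algebra (sum_scale sA sV) (semidirect_bracket brA brV rho)"
proof -
  have vsA: "vector_space sA" and bA: "bilinear_map sA sA sA brA"
    and antiA: "\<And>u v. brA u v = - brA v u"
    and MA: "\<And>x y z. jacobiator brA x y (brA x z) = brA (jacobiator brA x y z) x"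
    using assms(1) unfolding malcev_algebra_def by blast+
  have vsV: "vector_space sV" and bV: "bilinear_map sV sV sV brV"
    and antiV: "\<And>u v. brV u v = - brV v u"
    and MV: "\<And>a b c. jacobiator brV a b (brV a c) = brV (jacobiator brV a b c) a"
    using assms(2) unfolding malcev_algebra_def by blast+
  have bR: "bilinear_map sA sV sV rho"
    and R: "\<And>x y z v. rho (brA (brA x y) z) v =
        rho x (rho y (rho z v)) - rho z (rho x (rho y v))
        + rho y (rho (brA z x) v) - rho (brA y z) (rho x v)"
    using assms(3) unfolding module_malcev_algebra_def malcev_rep_def by auto
  have C1: "\<And>x y a b. rho (brA x y) (brV a b) =
          rho x (brV (rho y a) b) - brV (rho y (rho x a)) b
          - brV (rho x (rho y b)) a + rho y (brV (rho x b) a)"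
    and C2: "\<And>x y a b. brV (rho x a) (rho y b) =
          brV (rho (brA x y) a) b - rho x (brV (rho y a) b)
          + rho y (rho x (brV a b)) + brV (rho y (rho x b)) a"
    and C3: "\<And>x a b c. brV (rho x a) (brV b c) =
          brV (brV (rho x b) a) c - rho x (brV (brV b a) c)
          - brV (rho x (brV a c)) b - brV (brV (rho x c) b) a"
    using assms(3) unfolding module_malcev_algebra_def by auto
  have lA1: "\<And>w. Vector_Spaces.linear sA sA (\<lambda>u. brA u w)" and lA2: "\<And>w. Vector_Spaces.linear sA sA (brA w)"
    using bA unfolding bilinear_map_def by auto
  have lV1: "\<And>w. Vector_Spaces.linear sV sV (\<lambda>u. brV u w)" and lV2: "\<And>w. Vector_Spaces.linear sV sV (brV w)"
    using bV unfolding bilinear_map_def by auto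
  have lR1: "\<And>w. Vector_Spaces.linear sA sV (\<lambda>u. rho u w)" and lR2: "\<And>w. Vector_Spaces.linear sV sV (rho w)"
    using bR unfolding bilinear_map_def by auto
  note fA1 = lin_facts[OF lA1] and fA2 = lin_facts[OF lA2]
  note fV1 = lin_facts[OF lV1] and fV2 = lin_facts[OF lV2]
  note fR1 = lin_facts[OF lR1] and fR2 = lin_facts[OF lR2]
  have zA: "\<And>u. brA u u = 0" using zero_self[OF vsA] antiA by metis
  have zV: "\<And>u. brV u u = 0" using zero_self[OF vsV] antiV by metis
  have mA: "module sA" and mV: "module sV" using vsA vsV by (auto simp: module_iff_vector_space)
  have vsP: "vector_space (sum_scale sA sV)" by (rule vs_prod[OF vsA vsV])
  have SB_anti: "semidirect_bracket brA brV rho p q = - semidirect_bracket brA brV rho q p" for p q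
    unfolding semidirect_bracket_def
    by (simp add: prod_eq_iff antiA[of "fst p" "fst q"] antiV[of "snd p" "snd q"] algebra_simps)
  have lin1: "Vector_Spaces.linear (sum_scale sA sV) (sum_scale sA sV) (\<lambda>p. semidirect_bracket brA brV rho p q)" for q
    unfolding linear_iff using vsP
    by (simp add: semidirect_bracket_def sum_scale_def fA1 fA2 fV1 fV2 fR1 fR2
        module.scale_right_distrib[OF mV] module.scale_right_diff_distrib[OF mV] algebra_simps)
  have lin2: "Vector_Spaces.linear (sum_scale sA sV) (sum_scale sA sV) (semidirect_bracket brA brV rho p)" for p
    unfolding linear_iff using vsP
    by (simp add: semidirect_bracket_def sum_scale_def fA1 fA2 fV1 fV2 fR1 fR2
        module.scale_right_distrib[OF mV] module.scale_right_diff_distrib[OF mV] algebra_simps)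
  have mal: "jacobiator (semidirect_bracket brA brV rho) p q (semidirect_bracket brA brV rho p r)
      = semidirect_bracket brA brV rho (jacobiator (semidirect_bracket brA brV rho) p q r) p" for p q r
  proof -
    obtain x a where p: "p = (x, a)" by fastforce
    obtain y b where q: "q = (y, b)" by fastforce
    obtain z c where r: "r = (z, c)" by fastforce
    have s: "snd (jacobiator (semidirect_bracket brA brV rho) (x,a) (y,b) (semidirect_bracket brA brV rho (x,a) (z,c)))
       - snd (semidirect_bracket brA brV rho (jacobiator (semidirect_bracket brA brV rho) (x,a) (y,b) (z,c)) (x,a)) = 0"
      by (rule key_snd[OF fA1(1) fA2(1) fA1(2) fA2(2) fV1(1) fV2(1) fV1(2) fV2(2) fR1(1) fR2(1) fR1(2) fR2(2)
            fA1(3) fA2(3) fV1(3) fV2(3) fR1(3) fR2(3) antiA antiV zA zV R C1 C2 C3 MV])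
    have f: "fst (jacobiator (semidirect_bracket brA brV rho) (x,a) (y,b) (semidirect_bracket brA brV rho (x,a) (z,c)))
       = fst (semidirect_bracket brA brV rho (jacobiator (semidirect_bracket brA brV rho) (x,a) (y,b) (z,c)) (x,a))"
      using MA[of x y z] by (simp add: jacobiator_def semidirect_bracket_def)
    show ?thesis unfolding p q r using s f by (simp add: prod_eq_iff)
  qed
  show ?thesis unfolding malcev_algebra_def bilinear_map_def
    using vsP lin1 lin2 SB_anti mal by blast
qed

end
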